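(* Let $X$ be a topological space, $\Lambda$ a real Hausdorff topological vector space, $Y$ a topological space and $y_0\in Y$. Let $\varphi\in\mathcal{G}$, $\Psi\in\mathcal{H}$ and $J\in\mathcal{M}$, and assume that $\varphi(\Psi(x,\cdot))$ is convex on $\Lambda$ for each $x\in X$. Let $\mu>\theta(\varphi,\Psi,J)$ and let $\mathcal{N}$ be a filtering cover of $X$ such that, for each $A\in\mathcal{N}$, the function $x\mapsto J(x)-\mu\varphi(\Psi(x,\lambda))$ is lower semicontinuous and inf-compact in $A$ for all $\lambda\in\mathrm{conv}(\{\lambda_x:x\in X\})$. Then there exist $A\in\mathcal{N}$ and $\lambda^*\in\mathrm{conv}(\{\lambda_x:x\in A\})$ such that the restriction to $A$ of the function $x\mapsto J(x)-\mu\varphi(\Psi(x,\lambda^* ))$ has at least two global minima.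
   Context: A family $\mathcal{N}$ of non-empty subsets of $X$ is a filtering cover of $X$ if $\bigcup_{A\in\mathcal{N}}A=X$ and for each $A_1,A_2\in\mathcal{N}$ there is $A_3\in\mathcal{N}$ with $A_1\cup A_2\subseteq A_3$. $\mathcal{G}$ is the family of all lower semicontinuous functions $\varphi:Y\to[0,+\infty[$ with $\varphi^{-1}(0)=\{y_0\}$ such that $\inf_{Y\setminus V}\varphi>0$ for each neighbourhood $V$ of $y_0$. $\mathcal{H}$ is the family of all functions $\Psi:X\times\Lambda\to Y$ such that, for each $x\in X$, $\Psi(x,\cdot)$ is continuous, injective, open, and takes the value $y_0$ at a point $\lambda_x$, and the function $x\mapsto\lambda_x$ is not constant. $\mathcal{M}$ is the family of all functions $J:X\to\mathbb{R}$ whose set $M_J$ of global minima is non-empty. For $\varphi\in\mathcal{G}$, $\Psi\in\mathcal{H}$, $J\in\mathcal{M}$, $$\theta(\varphi,\Psi,J)=\inf\left\{\frac{J(x)-J(u)}{\varphi(\Psi(x,\lambda_u))}:(u,x)\in M_J\times X,\ \lambda_x\neq\lambda_u\right\}.$$ A function on a topological space is inf-compact if all its sublevel sets $\{\psi\leq r\}$ are compact. *)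

theory Defs
  imports "HOL-Analysis.Analysis"
begin

definition lsc_on :: "'a::topological_space set \<Rightarrow> ('a \<Rightarrow> real) \<Rightarrow> bool" where
  "lsc_on A f \<longleftrightarrow> (\<forall>r. openin (top_of_set A) {x \<in> A. r < f x})"

definition inf_compact_on :: "'a::topological_space set \<Rightarrow> ('a \<Rightarrow> real) \<Rightarrow> bool" where
  "inf_compact_on A f \<longleftrightarrow> (\<forall>r. compact {x \<in> A. f x \<le> r})"

definition filtering_cover :: "'a set set \<Rightarrow> bool" where
  "filtering_cover N \<longleftrightarrow> (\<forall>A\<in>N. A \<noteq> {}) \<and> \<Union>N = UNIV \<and>
     (\<forall>A1\<in>N. \<forall>A2\<in>N. \<exists>A3\<in>N. A1 \<union> A2 \<subseteq> A3)"

definition class_G :: "'y::topological_space \<Rightarrow> ('y \<Rightarrow> real) set" where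
  "class_G y0 = {\<phi>. (\<forall>y. 0 \<le> \<phi> y) \<and> lsc_on UNIV \<phi> \<and> \<phi> -` {0} = {y0} \<and>
      (\<forall>V. (\<exists>U. open U \<and> y0 \<in> U \<and> U \<subseteq> V) \<longrightarrow> (\<exists>c>0. \<forall>y\<in>-V. c \<le> \<phi> y))}"

definition class_H :: "'y::topological_space \<Rightarrow> ('x \<Rightarrow> 'l::topological_space \<Rightarrow> 'y) set" where
  "class_H y0 = {\<Psi>. (\<forall>x. continuous_on UNIV (\<Psi> x) \<and> inj (\<Psi> x) \<and>
        (\<forall>U. open U \<longrightarrow> open (\<Psi> x ` U)) \<and> y0 \<in> range (\<Psi> x)) \<and>
      (\<exists>x1 x2. (THE l. \<Psi> x1 l = y0) \<noteq> (THE l. \<Psi> x2 l = y0))}"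

definition lam :: "'y \<Rightarrow> ('x \<Rightarrow> 'l \<Rightarrow> 'y) \<Rightarrow> 'x \<Rightarrow> 'l" where
  "lam y0 \<Psi> x = (THE l. \<Psi> x l = y0)"

definition minima :: "('x \<Rightarrow> real) \<Rightarrow> 'x set" where
  "minima J = {u. \<forall>x. J u \<le> J x}"

definition class_M :: "('x \<Rightarrow> real) set" where
  "class_M = {J. minima J \<noteq> {}}"

definition theta :: "'y \<Rightarrow> ('y \<Rightarrow> real) \<Rightarrow> ('x \<Rightarrow> 'l \<Rightarrow> 'y) \<Rightarrow> ('x \<Rightarrow> real) \<Rightarrow> real" where
  "theta y0 \<phi> \<Psi> J = Inf {(J x - J u) / \<phi> (\<Psi> x (lam y0 \<Psi> u)) | u x.
       u \<in> minima J \<and> lam y0 \<Psi> x \<noteq> lam y0 \<Psi> u}"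

end

theory Submission
  imports Defs
begin


definition cube :: "nat \<Rightarrow> (nat \<Rightarrow> real) set" where
  "cube n = {x. (\<forall>i<n. 0 \<le> x i \<and> x i \<le> 1) \<and> (\<forall>i. n \<le> i \<longrightarrow> x i = 0)}"

definition seqconv :: "nat \<Rightarrow> (nat \<Rightarrow> nat \<Rightarrow> real) \<Rightarrow> (nat \<Rightarrow> real) \<Rightarrow> bool" where
  "seqconv n xs x \<longleftrightarrow> (\<forall>i<n. (\<lambda>k. xs k i) \<longlonglongrightarrow> x i)"

definition seqclosed :: "nat \<Rightarrow> (nat \<Rightarrow> real) set \<Rightarrow> bool" where
  "seqclosed n S \<longleftrightarrow> (\<forall>xs x. (\<forall>k. xs k \<in> S) \<longrightarrow> x \<in> cube n \<longrightarrow> seqconv n xs x \<longrightarrow> x \<in> S)"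

lemma cube_bw_aux:
  fixes xs :: "nat \<Rightarrow> nat \<Rightarrow> real"
  assumes xs: "\<And>k. xs k \<in> cube n"
  shows "m \<le> n \<Longrightarrow> \<exists>r. strict_mono r \<and> (\<forall>i<m. convergent (\<lambda>k. xs (r k) i))"
proof (induction m)
  case 0
  have "strict_mono (id::nat\<Rightarrow>nat)" by (rule strict_mono_id)
  then show ?case by blast
next
  case (Suc m)
  then obtain r where r: "strict_mono r" "\<forall>i<m. convergent (\<lambda>k. xs (r k) i)" by auto
  have "bounded (range (\<lambda>k. xs (r k) m))"
    using xs Suc.prems unfolding bounded_iff cube_def
    by (intro exI[of _ 1]) (auto simp: Suc_le_eq)
  then obtain l r' where r': "strict_mono r'" "((\<lambda>k. xs (r k) m) \<circ> r') \<longlonglongrightarrow> l"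
    using bounded_imp_convergent_subsequence by blast
  show ?case
  proof (intro exI conjI allI impI)
    show "strict_mono (r \<circ> r')" using r r' strict_mono_o by blast
    fix i assume "i < Suc m"
    then consider "i < m" | "i = m" by linarith
    then show "convergent (\<lambda>k. xs ((r \<circ> r') k) i)"
    proof cases
      case 1
      then have "convergent (\<lambda>k. xs (r k) i)" using r by auto
      then obtain L where "(\<lambda>k. xs (r k) i) \<longlonglongrightarrow> L" by (auto simp: convergent_def)
      from LIMSEQ_subseq_LIMSEQ[OF this r'(1)]
      show ?thesis by (auto simp: convergent_def o_def)
    next
      case 2
      then show ?thesis using r' by (auto simp: convergent_def o_def)
    qed
  qed
qed

lemma cube_bw:
  fixes xs :: "nat \<Rightarrow> nat \<Rightarrow> real"
  assumes xs: "\<And>k. xs k \<in> cube n"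
  obtains r z where "strict_mono r" "z \<in> cube n" "seqconv n (xs \<circ> r) z"
proof -
  obtain r where r: "strict_mono r" "\<forall>i<n. convergent (\<lambda>k. xs (r k) i)"
    using cube_bw_aux[where m=n and xs=xs and n=n] xs by blast
  define z where "z = (\<lambda>i. if i < n then lim (\<lambda>k. xs (r k) i) else 0)"
  have lim: "(\<lambda>k. xs (r k) i) \<longlonglongrightarrow> z i" if "i < n" for i
    using r that by (simp add: z_def convergent_LIMSEQ_iff)
  have "z \<in> cube n"
    unfolding cube_def
  proof (safe)
    fix i assume i: "i < n"
    show "0 \<le> z i"
      by (rule LIMSEQ_le_const[OF lim[OF i]]) (use xs i in \<open>auto simp: cube_def\<close>)
    show "z i \<le> 1"
      by (rule LIMSEQ_le_const2[OF lim[OF i]]) (use xs i in \<open>auto simp: cube_def\<close>)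
  qed (auto simp: z_def)
  moreover have "seqconv n (xs \<circ> r) z" using lim by (auto simp: seqconv_def)
  ultimately show ?thesis using r that by blast
qed

lemma close_lim:
  fixes a b e :: "nat \<Rightarrow> real"
  assumes "\<And>k. \<bar>a k - b k\<bar> \<le> e k" "e \<longlonglongrightarrow> 0" "b \<longlonglongrightarrow> L"
  shows "a \<longlonglongrightarrow> L"
proof -
  have "(\<lambda>k. a k - b k) \<longlonglongrightarrow> 0"
    by (rule Lim_null_comparison[OF _ assms(2)]) (use assms(1) in auto)
  from tendsto_add[OF this assms(3)] show ?thesis by simp
qed

lemma inv_suc_sub:
  assumes "strict_mono (r::nat\<Rightarrow>nat)"
  shows "(\<lambda>k. 1 / real (Suc (r k))) \<longlonglongrightarrow> 0"
  using LIMSEQ_subseq_LIMSEQ[OF LIMSEQ_inverse_real_of_nat assms]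
  by (simp add: o_def divide_inverse)

lemma pm_cube:
  fixes Z Q :: "nat \<Rightarrow> (nat \<Rightarrow> real) set"
  assumes closedZ: "\<And>i. i<n \<Longrightarrow> seqclosed n (Z i)"
    and closedO: "\<And>i. i<n \<Longrightarrow> seqclosed n (Q i)"
    and cover: "\<And>i. i<n \<Longrightarrow> cube n \<subseteq> Z i \<union> Q i"
    and faceZ: "\<And>i x. i<n \<Longrightarrow> x \<in> cube n \<Longrightarrow> x i = 0 \<Longrightarrow> x \<in> Z i"
    and faceO: "\<And>i x. i<n \<Longrightarrow> x \<in> cube n \<Longrightarrow> x i = 1 \<Longrightarrow> x \<in> Q i"
  shows "\<exists>x\<in>cube n. \<forall>i<n. x \<in> Z i \<and> x \<in> Q i"
proof -
  define emb where "emb p (y::nat\<Rightarrow>nat) = (\<lambda>i. if i < n then real (y i) / real p else 0)" for p y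
  have emb_cube: "emb p y \<in> cube n" if "0 < p" "\<forall>i<n. y i \<le> p" for p y
    using that by (auto simp: cube_def emb_def divide_le_eq_1)
  define P where "P k z ab \<longleftrightarrow> (\<forall>i<n. fst (ab i) \<in> Z i \<and> fst (ab i) \<in> cube n \<and> snd (ab i) \<in> Q i \<and>
      snd (ab i) \<in> cube n \<and> (\<forall>j<n. \<bar>fst (ab i) j - z j\<bar> \<le> 1 / real (Suc k) \<and>
      \<bar>snd (ab i) j - z j\<bar> \<le> 1 / real (Suc k)))" for k z ab
  have step: "\<exists>z ab. z \<in> cube n \<and> P k z ab" for k
  proof -
    define p where "p = Suc k"
    have p0: "0 < p" by (simp add: p_def)
    define label where "label x i = (if x i = 0 then 0 else if x i = p then 1
        else if emb p x \<in> Z i then 0 else (1::nat))" for x i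
    obtain q where q: "\<forall>i<n. q i < p"
      "\<forall>i<n. \<exists>r s. (\<forall>j<n. q j \<le> r j \<and> r j \<le> q j + 1) \<and> (\<forall>j<n. q j \<le> s j \<and> s j \<le> q j + 1) \<and> label r i \<noteq> label s i"
      by (rule kuhn_lemma[OF p0, of n label]) (auto simp: label_def p_def)
    define z where "z = emb p q"
    have zc: "z \<in> cube n" unfolding z_def using q(1) p0 by (intro emb_cube) (auto simp: less_imp_le)
    have cell: "emb p y \<in> cube n \<and> (\<forall>j<n. \<bar>emb p y j - z j\<bar> \<le> 1 / real (Suc k))"
      if y: "\<forall>j<n. q j \<le> y j \<and> y j \<le> q j + 1" for y
    proof
      have "\<forall>j<n. y j \<le> p" using y q(1) by (metis Suc_eq_plus1 Suc_leI le_trans)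
      then show "emb p y \<in> cube n" using emb_cube p0 by blast
      show "\<forall>j<n. \<bar>emb p y j - z j\<bar> \<le> 1 / real (Suc k)"
      proof (intro allI impI)
        fix j assume j: "j < n"
        have "emb p y j - z j = (real (y j) - real (q j)) / real p"
          using j by (simp add: emb_def z_def diff_divide_distrib)
        moreover have "0 \<le> real (y j) - real (q j)" "real (y j) - real (q j) \<le> 1" using y j by auto
        ultimately show "\<bar>emb p y j - z j\<bar> \<le> 1 / real (Suc k)"
          using p0 by (simp add: p_def divide_le_cancel)
      qed
    qed
    have lab0: "emb p y \<in> Z i" if "i < n" "emb p y \<in> cube n" "label y i = 0" for y i
    proof (cases "y i = 0")
      case True
      then have "emb p y i = 0" by (simp add: emb_def that(1))
      then show ?thesis using faceZ that by blast
    next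
      case False
      then show ?thesis using that by (auto simp: label_def split: if_splits)
    qed
    have lab1: "emb p y \<in> Q i" if "i < n" "emb p y \<in> cube n" "label y i \<noteq> 0" for y i
    proof -
      have "y i \<noteq> 0" using that by (auto simp: label_def split: if_splits)
      show ?thesis
      proof (cases "y i = p")
        case True
        then show ?thesis using that p0 faceO[of i "emb p y"] by (auto simp: emb_def)
      next
        case False
        then have "emb p y \<notin> Z i" using that \<open>y i \<noteq> 0\<close> by (auto simp: label_def)
        then show ?thesis using cover[OF that(1)] that(2) by blast
      qed
    qed
    have "\<forall>i. \<exists>ab. i < n \<longrightarrow> (fst ab \<in> Z i \<and> fst ab \<in> cube n \<and> snd ab \<in> Q i \<and>
      snd ab \<in> cube n \<and> (\<forall>j<n. \<bar>fst ab j - z j\<bar> \<le> 1 / real (Suc k) \<and>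
      \<bar>snd ab j - z j\<bar> \<le> 1 / real (Suc k)))"
    proof (intro allI)
      fix i
      show "\<exists>ab. i < n \<longrightarrow> (fst ab \<in> Z i \<and> fst ab \<in> cube n \<and> snd ab \<in> Q i \<and>
        snd ab \<in> cube n \<and> (\<forall>j<n. \<bar>fst ab j - z j\<bar> \<le> 1 / real (Suc k) \<and>
        \<bar>snd ab j - z j\<bar> \<le> 1 / real (Suc k)))"
      proof (cases "i < n")
        case False then show ?thesis by blast
      next
        case True
        then obtain r s where rs: "\<forall>j<n. q j \<le> r j \<and> r j \<le> q j + 1" "\<forall>j<n. q j \<le> s j \<and> s j \<le> q j + 1"
            "label r i \<noteq> label s i" using q(2) by blast
        note cr = cell[OF rs(1)] and cs = cell[OF rs(2)]
        show ?thesis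
        proof (cases "label r i = 0")
          case True
          then have "label s i \<noteq> 0" using rs(3) by auto
          then show ?thesis using lab0[of i r] lab1[of i s] True \<open>i<n\<close> cr cs
            by (intro exI[of _ "(emb p r, emb p s)"]) auto
        next
          case False
          have "label s i = 0 \<or> label s i = 1" "label r i = 0 \<or> label r i = 1" by (simp_all add: label_def)
          then have "label s i = 0" using rs(3) False by auto
          then show ?thesis using lab0[of i s] lab1[of i r] False \<open>i<n\<close> cr cs
            by (intro exI[of _ "(emb p s, emb p r)"]) auto
        qed
      qed
    qed
    from choice[OF this] obtain ab where "\<forall>i. i < n \<longrightarrow> (fst (ab i) \<in> Z i \<and> fst (ab i) \<in> cube n \<and> snd (ab i) \<in> Q i \<and>
      snd (ab i) \<in> cube n \<and> (\<forall>j<n. \<bar>fst (ab i) j - z j\<bar> \<le> 1 / real (Suc k) \<and>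
      \<bar>snd (ab i) j - z j\<bar> \<le> 1 / real (Suc k)))" ..
    then show ?thesis using zc unfolding P_def by blast
  qed
  then have "\<forall>k. \<exists>zab. fst zab \<in> cube n \<and> P k (fst zab) (snd zab)" by simp
  from choice[OF this] obtain zab where zab: "\<forall>k. fst (zab k) \<in> cube n \<and> P k (fst (zab k)) (snd (zab k))" ..
  define zs where "zs k = fst (zab k)" for k
  define abf where "abf k = snd (zab k)" for k
  have zs: "\<And>k. zs k \<in> cube n" "\<And>k. P k (zs k) (abf k)" using zab unfolding zs_def abf_def by simp_all
  obtain r z where rz: "strict_mono r" "z \<in> cube n" "seqconv n (zs \<circ> r) z"
    by (rule cube_bw[OF zs(1)])
  have e0: "(\<lambda>k. 1 / real (Suc (r k))) \<longlonglongrightarrow> 0" by (rule inv_suc_sub[OF rz(1)])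
  show ?thesis
  proof (intro bexI[OF _ rz(2)] allI impI conjI)
    fix i assume i: "i < n"
    have A: "\<And>k. fst (abf k i) \<in> Z i \<and> fst (abf k i) \<in> cube n \<and> snd (abf k i) \<in> Q i \<and>
      snd (abf k i) \<in> cube n \<and> (\<forall>j<n. \<bar>fst (abf k i) j - zs k j\<bar> \<le> 1 / real (Suc k) \<and>
      \<bar>snd (abf k i) j - zs k j\<bar> \<le> 1 / real (Suc k))"
      using zs(2) i unfolding P_def by blast
    have "seqconv n (\<lambda>k. fst (abf (r k) i)) z"
      unfolding seqconv_def
    proof (intro allI impI)
      fix j assume j: "j < n"
      show "(\<lambda>k. fst (abf (r k) i) j) \<longlonglongrightarrow> z j"
        by (rule close_lim[OF _ e0, of _ "\<lambda>k. zs (r k) j"]) (use A j rz(3) in \<open>auto simp: seqconv_def o_def\<close>)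
    qed
    then show "z \<in> Z i" using closedZ[OF i] A rz(2) unfolding seqclosed_def by (metis (no_types, lifting))
    have "seqconv n (\<lambda>k. snd (abf (r k) i)) z"
      unfolding seqconv_def
    proof (intro allI impI)
      fix j assume j: "j < n"
      show "(\<lambda>k. snd (abf (r k) i) j) \<longlonglongrightarrow> z j"
        by (rule close_lim[OF _ e0, of _ "\<lambda>k. zs (r k) j"]) (use A j rz(3) in \<open>auto simp: seqconv_def o_def\<close>)
    qed
    then show "z \<in> Q i" using closedO[OF i] A rz(2) unfolding seqclosed_def by (metis (no_types, lifting))
  qed
qed

lemma brouwer_seq:
  assumes fim: "\<And>x. x \<in> cube n \<Longrightarrow> f x \<in> cube n"
    and cont: "\<And>xs x. (\<And>k. xs k \<in> cube n) \<Longrightarrow> x \<in> cube n \<Longrightarrow> seqconv n xs x \<Longrightarrow>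
          seqconv n (\<lambda>k. f (xs k)) (f x)"
  shows "\<exists>x\<in>cube n. f x = x"
proof -
  define Z where "Z i = {x\<in>cube n. x i \<le> f x i}" for i
  define Q where "Q i = {x\<in>cube n. f x i \<le> x i}" for i
  have "\<exists>x\<in>cube n. \<forall>i<n. x \<in> Z i \<and> x \<in> Q i"
  proof (rule pm_cube)
    fix i assume i: "i < n"
    show "seqclosed n (Z i)" unfolding seqclosed_def
    proof (intro allI impI)
      fix xs x assume xs: "\<forall>k. xs k \<in> Z i" and x: "x \<in> cube n" and c: "seqconv n xs x"
      have xc: "\<And>k. xs k \<in> cube n" using xs by (auto simp: Z_def)
      have "(\<lambda>k. xs k i) \<longlonglongrightarrow> x i" using c i by (auto simp: seqconv_def)
      moreover have "(\<lambda>k. f (xs k) i) \<longlonglongrightarrow> f x i" using cont[OF xc x c] i by (auto simp: seqconv_def)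
      ultimately have "x i \<le> f x i" by (rule LIMSEQ_le) (use xs in \<open>auto simp: Z_def\<close>)
      then show "x \<in> Z i" using x by (auto simp: Z_def)
    qed
    show "seqclosed n (Q i)" unfolding seqclosed_def
    proof (intro allI impI)
      fix xs x assume xs: "\<forall>k. xs k \<in> Q i" and x: "x \<in> cube n" and c: "seqconv n xs x"
      have xc: "\<And>k. xs k \<in> cube n" using xs by (auto simp: Q_def)
      have "(\<lambda>k. xs k i) \<longlonglongrightarrow> x i" using c i by (auto simp: seqconv_def)
      moreover have "(\<lambda>k. f (xs k) i) \<longlonglongrightarrow> f x i" using cont[OF xc x c] i by (auto simp: seqconv_def)
      moreover have "\<exists>N. \<forall>k\<ge>N. f (xs k) i \<le> xs k i" using xs by (auto simp: Q_def)
      ultimately have "f x i \<le> x i" by (intro LIMSEQ_le[of "\<lambda>k. f (xs k) i" _ "\<lambda>k. xs k i"])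
      then show "x \<in> Q i" using x by (auto simp: Q_def)
    qed
    show "cube n \<subseteq> Z i \<union> Q i" by (auto simp: Z_def Q_def)
  next
    fix i x assume "i < n" "x \<in> cube n" "x i = 0"
    then show "x \<in> Z i" using fim[of x] by (auto simp: Z_def cube_def)
  next
    fix i x assume "i < n" "x \<in> cube n" "x i = 1"
    then show "x \<in> Q i" using fim[of x] by (auto simp: Q_def cube_def)
  qed
  then obtain x where x: "x \<in> cube n" "\<forall>i<n. x \<in> Z i \<and> x \<in> Q i" by blast
  have "f x = x"
  proof
    fix i show "f x i = x i"
    proof (cases "i < n")
      case True then show ?thesis using x(2) by (force simp: Z_def Q_def)
    next
      case False then show ?thesis using x(1) fim[OF x(1)] by (auto simp: cube_def)
    qed
  qed
  then show ?thesis using x by blast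
qed



lemma tvs_tendsto_add:
  fixes f g :: "'b \<Rightarrow> 'l::{real_vector,topological_space}"
  assumes tvs_add: "continuous_on UNIV (\<lambda>p::'l \<times> 'l. fst p + snd p)"
    and "(f \<longlongrightarrow> a) F" "(g \<longlongrightarrow> b) F"
  shows "((\<lambda>x. f x + g x) \<longlongrightarrow> a + b) F"
proof -
  have "((\<lambda>x. (f x, g x)) \<longlongrightarrow> (a, b)) F" by (rule tendsto_Pair[OF assms(2,3)])
  from continuous_on_tendsto_compose[OF tvs_add this] show ?thesis by simp
qed

lemma tvs_tendsto_scale:
  fixes f :: "'b \<Rightarrow> real" and c :: "'l::{real_vector,topological_space}"
  assumes tvs_scale: "continuous_on UNIV (\<lambda>p::real \<times> 'l. fst p *\<^sub>R snd p)"
    and "(f \<longlongrightarrow> a) F"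
  shows "((\<lambda>x. f x *\<^sub>R c) \<longlongrightarrow> a *\<^sub>R c) F"
proof -
  have "((\<lambda>x. (f x, c)) \<longlongrightarrow> (a, c)) F" by (rule tendsto_Pair[OF assms(2) tendsto_const])
  from continuous_on_tendsto_compose[OF tvs_scale this] show ?thesis by simp
qed

lemma tvs_tendsto_sum:
  fixes g :: "'b \<Rightarrow> nat \<Rightarrow> 'l::{real_vector,topological_space}"
  assumes tvs_add: "continuous_on UNIV (\<lambda>p::'l \<times> 'l. fst p + snd p)"
  shows "finite S \<Longrightarrow> (\<And>j. j \<in> S \<Longrightarrow> ((\<lambda>x. g x j) \<longlongrightarrow> L j) F) \<Longrightarrow>
    ((\<lambda>x. \<Sum>j\<in>S. g x j) \<longlongrightarrow> (\<Sum>j\<in>S. L j)) F"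
proof (induction S rule: finite_induct)
  case empty
  then show ?case by simp
next
  case (insert j S)
  have "((\<lambda>x. g x j + (\<Sum>j\<in>S. g x j)) \<longlongrightarrow> L j + (\<Sum>j\<in>S. L j)) F"
    by (rule tvs_tendsto_add[OF tvs_add]) (use insert in auto)
  then show ?case using insert by simp
qed

lemma cluster_pt:
  fixes xs :: "nat \<Rightarrow> 'a::topological_space"
  assumes K: "compact K" and xs: "\<And>k. xs k \<in> K"
  shows "\<exists>z\<in>K. \<forall>U. open U \<longrightarrow> z \<in> U \<longrightarrow> (\<forall>N. \<exists>k\<ge>N. xs k \<in> U)"
proof (rule ccontr)
  assume "\<not> ?thesis"
  then have "\<forall>z\<in>K. \<exists>Un0. open (fst Un0) \<and> z \<in> fst Un0 \<and> (\<forall>k\<ge>snd Un0. xs k \<notin> fst Un0)"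
    by force
  then obtain Un0 where Un0: "\<And>z. z\<in>K \<Longrightarrow> open (fst (Un0 z)) \<and> z \<in> fst (Un0 z) \<and> (\<forall>k\<ge>snd (Un0 z). xs k \<notin> fst (Un0 z))"
    by metis
  have "K \<subseteq> (\<Union>z\<in>K. fst (Un0 z))" using Un0 by blast
  then obtain K' where K': "K' \<subseteq> K" "finite K'" "K \<subseteq> (\<Union>z\<in>K'. fst (Un0 z))"
    using compactE_image[OF K, of K "\<lambda>z. fst (Un0 z)"] Un0 by blast
  define N where "N = Max (insert 0 ((\<lambda>z. snd (Un0 z)) ` K'))"
  have "xs N \<in> K" by (rule xs)
  then obtain z where z: "z \<in> K'" "xs N \<in> fst (Un0 z)" using K' by blast
  have "snd (Un0 z) \<le> N" unfolding N_def using K' z by (auto intro: Max_ge)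
  then show False using Un0[of z] z K' by auto
qed

definition dd :: "nat \<Rightarrow> (nat \<Rightarrow> real) \<Rightarrow> (nat \<Rightarrow> real) \<Rightarrow> real" where
  "dd n t s = (\<Sum>i<n. \<bar>t i - s i\<bar>)"

definition DD :: "nat \<Rightarrow> (nat \<Rightarrow> real) set \<Rightarrow> (nat \<Rightarrow> real) \<Rightarrow> real" where
  "DD n T t = (if T = {} then 1 else Inf ((dd n t) ` T))"

lemma dd_nonneg: "0 \<le> dd n t s" by (simp add: dd_def sum_nonneg)
lemma dd_sym: "dd n t s = dd n s t" by (simp add: dd_def abs_minus_commute)
lemma dd_self: "dd n t t = 0" by (simp add: dd_def)
lemma dd_tri: "dd n t s \<le> dd n t u + dd n u s"
  unfolding dd_def sum.distrib[symmetric] by (rule sum_mono) linarith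
lemma dd_coord: "i < n \<Longrightarrow> \<bar>t i - s i\<bar> \<le> dd n t s"
  unfolding dd_def by (rule member_le_sum) auto

lemma DD_nonneg: "0 \<le> DD n T t"
  unfolding DD_def by (auto intro!: cInf_greatest simp: dd_nonneg)

lemma DD_le: "s \<in> T \<Longrightarrow> DD n T t \<le> dd n t s"
  unfolding DD_def by (auto intro!: cInf_lower bdd_belowI[of _ 0] simp: dd_nonneg)

lemma DD_zero: "t \<in> T \<Longrightarrow> DD n T t = 0"
  using DD_le[of t T n t] DD_nonneg[of n T t] by (simp add: dd_self)

lemma DD_lip: "DD n T t \<le> DD n T t' + dd n t t'"
proof (cases "T = {}")
  case True then show ?thesis by (simp add: DD_def dd_nonneg)
next
  case False
  have "DD n T t - dd n t t' \<le> DD n T t'"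
    unfolding DD_def[of n T t'] using False
  proof (simp, intro cInf_greatest)
    fix s assume "s \<in> dd n t' ` T"
    then obtain s' where s': "s' \<in> T" "s = dd n t' s'" by auto
    have "DD n T t \<le> dd n t s'" by (rule DD_le[OF s'(1)])
    also have "\<dots> \<le> dd n t t' + dd n t' s'" by (rule dd_tri)
    finally show "DD n T t - dd n t t' \<le> s" using s' by simp
  qed (use False in auto)
  then show ?thesis by simp
qed

lemma dd_tendsto:
  assumes "seqconv n ts t"
  shows "(\<lambda>k. dd n (ts k) t) \<longlonglongrightarrow> 0"
proof -
  have "(\<lambda>k. \<Sum>i<n. \<bar>ts k i - t i\<bar>) \<longlonglongrightarrow> (\<Sum>i<n. \<bar>t i - t i\<bar>)"
    by (intro tendsto_sum tendsto_rabs tendsto_diff tendsto_const) (use assms in \<open>auto simp: seqconv_def\<close>)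
  then show ?thesis by (simp add: dd_def)
qed

lemma DD_tendsto:
  assumes "seqconv n ts t"
  shows "(\<lambda>k. DD n T (ts k)) \<longlonglongrightarrow> DD n T t"
proof (rule close_lim[OF _ dd_tendsto[OF assms]])
  fix k
  show "\<bar>DD n T (ts k) - DD n T t\<bar> \<le> dd n (ts k) t"
    using DD_lip[of n T "ts k" t] DD_lip[of n T t "ts k"] dd_sym[of n t "ts k"] by linarith
qed simp

lemma DD_pos:
  assumes cl: "seqclosed n T" and t: "t \<in> cube n" "t \<notin> T"
  shows "0 < DD n T t"
proof (rule ccontr)
  assume "\<not> 0 < DD n T t"
  then have T: "T \<noteq> {}" and D0: "Inf (dd n t ` T) \<le> 0" by (auto simp: DD_def split: if_splits)
  have "\<forall>k. \<exists>s. s \<in> T \<and> dd n t s < 1 / real (Suc k)"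
  proof
    fix k
    have "Inf (dd n t ` T) < 1 / real (Suc k)" using D0 by (smt (verit) of_nat_0_less_iff zero_less_Suc divide_pos_pos)
    then show "\<exists>s. s \<in> T \<and> dd n t s < 1 / real (Suc k)"
      using T by (subst (asm) cInf_less_iff) (auto intro: bdd_belowI[of _ 0] simp: dd_nonneg)
  qed
  then obtain ss where ss: "\<And>k. ss k \<in> T" "\<And>k. dd n t (ss k) < 1 / real (Suc k)" by metis
  have "seqconv n ss t" unfolding seqconv_def
  proof (intro allI impI)
    fix i assume i: "i < n"
    show "(\<lambda>k. ss k i) \<longlonglongrightarrow> t i"
    proof (rule close_lim[of _ _ "\<lambda>k. 1 / real (Suc k)"])
      fix k show "\<bar>ss k i - t i\<bar> \<le> 1 / real (Suc k)"
        using dd_coord[OF i, of t "ss k"] ss(2)[of k] by (simp add: abs_minus_commute)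
    qed (use inv_suc_sub[of "\<lambda>k. k"] in \<open>auto simp: strict_mono_def\<close>)
  qed
  then have "t \<in> T" using cl t(1) ss(1) unfolding seqclosed_def by blast
  then show False using t(2) by blast
qed



definition Wt :: "nat \<Rightarrow> (nat \<Rightarrow> real) \<Rightarrow> nat \<Rightarrow> real" where
  "Wt n t j = (if j < n then t j else 1 - (\<Sum>i<n. t i))"

definition simp_set :: "nat \<Rightarrow> (nat \<Rightarrow> real) set" where
  "simp_set n = {t \<in> cube n. (\<Sum>i<n. t i) \<le> 1}"

definition bet :: "nat \<Rightarrow> (nat \<Rightarrow> 'l::real_vector) \<Rightarrow> (nat \<Rightarrow> real) \<Rightarrow> 'l" where
  "bet n Lp t = (\<Sum>j\<le>n. Wt n t j *\<^sub>R Lp j)"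

lemma sum_atMost_split: "(\<Sum>j\<le>(n::nat). g j) = (\<Sum>j<n. g j) + (g n :: 'a::comm_monoid_add)"
  by (metis sum.lessThan_Suc lessThan_Suc_atMost)

lemma Wt_nonneg: "t \<in> simp_set n \<Longrightarrow> j \<le> n \<Longrightarrow> 0 \<le> Wt n t j"
  by (auto simp: Wt_def simp_set_def cube_def)

lemma Wt_sum: "(\<Sum>j\<le>n. Wt n t j) = 1"
  by (simp add: sum_atMost_split Wt_def)

lemma bet_in_hull: "t \<in> simp_set n \<Longrightarrow> bet n Lp t \<in> convex hull (Lp ` {..n})"
  unfolding bet_def
  by (rule convex_sum) (auto simp: Wt_sum Wt_nonneg intro: hull_inc)

lemma Wt_tendsto:
  assumes "seqconv n ts t" "j \<le> n"
  shows "(\<lambda>k. Wt n (ts k) j) \<longlonglongrightarrow> Wt n t j"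
proof (cases "j < n")
  case True then show ?thesis using assms by (simp add: Wt_def seqconv_def)
next
  case False
  have "(\<lambda>k. 1 - (\<Sum>i<n. ts k i)) \<longlonglongrightarrow> 1 - (\<Sum>i<n. t i)"
    by (intro tendsto_diff tendsto_const tendsto_sum) (use assms in \<open>auto simp: seqconv_def\<close>)
  then show ?thesis using False by (simp add: Wt_def)
qed

lemma bet_tendsto:
  fixes Lp :: "nat \<Rightarrow> 'l::{real_vector,topological_space}"
  assumes tvs_add: "continuous_on UNIV (\<lambda>p::'l \<times> 'l. fst p + snd p)"
    and tvs_scale: "continuous_on UNIV (\<lambda>p::real \<times> 'l. fst p *\<^sub>R snd p)"
    and c: "seqconv n ts t"
  shows "(\<lambda>k. bet n Lp (ts k)) \<longlonglongrightarrow> bet n Lp t"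
  unfolding bet_def
  by (rule tvs_tendsto_sum[OF tvs_add]) (auto intro!: tvs_tendsto_scale[OF tvs_scale] Wt_tendsto[OF c])

lemma jensen_bet:
  fixes G :: "'l::real_vector \<Rightarrow> real"
  assumes "convex_on UNIV G" "t \<in> simp_set n"
  shows "G (bet n Lp t) \<le> (\<Sum>j\<le>n. Wt n t j * G (Lp j))"
  unfolding bet_def
  by (rule convex_on_sum[OF _ _ assms(1)]) (use assms(2) in \<open>auto simp: Wt_sum Wt_nonneg\<close>)

lemma decomp_bet:
  fixes G :: "'l::real_vector \<Rightarrow> real"
  assumes cv: "convex_on UNIV G" and t: "t \<in> simp_set n" and t': "t' \<in> simp_set n"
    and e: "0 < e" "e \<le> 1"
    and W: "\<And>j. j \<le> n \<Longrightarrow> (1 - e) * Wt n t j \<le> Wt n t' j"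
    and Bm: "\<And>j. j \<le> n \<Longrightarrow> G (Lp j) \<le> Bm"
  shows "G (bet n Lp t') \<le> (1 - e) * G (bet n Lp t) + e * Bm"
proof -
  define v where "v j = (Wt n t' j - (1 - e) * Wt n t j) / e" for j
  have v0: "0 \<le> v j" if "j \<le> n" for j using W[OF that] e by (simp add: v_def)
  have vs: "(\<Sum>j\<le>n. v j) = 1"
    using e by (simp add: v_def sum_divide_distrib[symmetric] sum_subtractf sum_distrib_left[symmetric] Wt_sum)
  define y where "y = (\<Sum>j\<le>n. v j *\<^sub>R Lp j)"
  have ev: "e * v j = Wt n t' j - (1 - e) * Wt n t j" for j using e by (simp add: v_def)
  have eq: "bet n Lp t' = (1 - e) *\<^sub>R bet n Lp t + e *\<^sub>R y"
  proof -
    have "(1 - e) *\<^sub>R bet n Lp t + e *\<^sub>R y = (\<Sum>j\<le>n. ((1 - e) * Wt n t j + e * v j) *\<^sub>R Lp j)"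
      by (simp add: bet_def y_def scaleR_sum_right scaleR_add_left sum.distrib)
    also have "\<dots> = bet n Lp t'" by (simp add: ev bet_def)
    finally show ?thesis by simp
  qed
  have Gy: "G y \<le> Bm"
  proof -
    have "G y \<le> (\<Sum>j\<le>n. v j * G (Lp j))"
      unfolding y_def by (rule convex_on_sum[OF _ _ cv]) (auto simp: vs v0)
    also have "\<dots> \<le> (\<Sum>j\<le>n. v j * Bm)" by (intro sum_mono mult_left_mono Bm v0) auto
    also have "\<dots> = Bm" by (simp add: sum_distrib_right[symmetric] vs)
    finally show ?thesis .
  qed
  have "G (bet n Lp t') \<le> (1 - e) * G (bet n Lp t) + e * G y"
    unfolding eq by (rule convex_onD[OF cv]) (use e in auto)
  also have "\<dots> \<le> (1 - e) * G (bet n Lp t) + e * Bm" using Gy e by simp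
  finally show ?thesis .
qed

lemma simp_closed:
  assumes "\<And>k. ts k \<in> simp_set n" "t \<in> cube n" "seqconv n ts t"
  shows "t \<in> simp_set n"
proof -
  have "(\<lambda>k. \<Sum>i<n. ts k i) \<longlonglongrightarrow> (\<Sum>i<n. t i)"
    by (intro tendsto_sum) (use assms in \<open>auto simp: seqconv_def\<close>)
  then have "(\<Sum>i<n. t i) \<le> 1" by (rule LIMSEQ_le_const2) (use assms in \<open>auto simp: simp_set_def\<close>)
  then show ?thesis using assms by (simp add: simp_set_def)
qed



lemma core:
  fixes F :: "'x::topological_space \<Rightarrow> 'l::{real_vector,topological_space} \<Rightarrow> real"
    and A :: "'x set" and Lp :: "nat \<Rightarrow> 'l" and n :: nat and a Bm :: real
  assumes tvs_add: "continuous_on UNIV (\<lambda>p::'l \<times> 'l. fst p + snd p)"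
    and tvs_scale: "continuous_on UNIV (\<lambda>p::real \<times> 'l. fst p *\<^sub>R snd p)"
    and usc: "\<And>x r. x \<in> A \<Longrightarrow> open {l. F x l < r}"
    and conc: "\<And>x. x \<in> A \<Longrightarrow> convex_on UNIV (\<lambda>l. - F x l)"
    and lsc: "\<And>l. l \<in> convex hull (Lp ` {..n}) \<Longrightarrow> lsc_on A (\<lambda>x. F x l)"
    and exmin: "\<And>l. l \<in> convex hull (Lp ` {..n}) \<Longrightarrow> \<exists>x. x \<in> A \<and> (\<forall>y\<in>A. F x l \<le> F y l)"
    and uniq: "\<And>l x1 x2. l \<in> convex hull (Lp ` {..n}) \<Longrightarrow> x1 \<in> A \<Longrightarrow> x2 \<in> A \<Longrightarrow>
        (\<forall>y\<in>A. F x1 l \<le> F y l) \<Longrightarrow> (\<forall>y\<in>A. F x2 l \<le> F y l) \<Longrightarrow> x1 = x2"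
    and cpt: "\<And>j. j \<le> n \<Longrightarrow> compact {x\<in>A. F x (Lp j) \<le> a}"
    and bound: "\<And>l. l \<in> convex hull (Lp ` {..n}) \<Longrightarrow> \<exists>x\<in>A. F x l \<le> a"
    and cover: "\<And>x. x \<in> A \<Longrightarrow> \<exists>j\<le>n. a < F x (Lp j)"
    and lowB: "\<And>j x. j \<le> n \<Longrightarrow> x \<in> A \<Longrightarrow> - F x (Lp j) \<le> Bm"
  shows False
proof -
  define m where "m t = (SOME x. x \<in> A \<and> (\<forall>y\<in>A. F x (bet n Lp t) \<le> F y (bet n Lp t)))" for t
  have m: "m t \<in> A \<and> (\<forall>y\<in>A. F (m t) (bet n Lp t) \<le> F y (bet n Lp t))" if "t \<in> simp_set n" for t
    unfolding m_def by (rule someI_ex[OF exmin[OF bet_in_hull[OF that]]])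
  define T where "T j = {t \<in> simp_set n. F (m t) (Lp j) \<le> a}" for j
  have Tcl: "seqclosed n (T j)" if jn: "j \<le> n" for j
    unfolding seqclosed_def
  proof (intro allI impI)
    fix ts t assume ts: "\<forall>k. ts k \<in> T j" and tc: "t \<in> cube n" and c: "seqconv n ts t"
    have tsS: "\<And>k. ts k \<in> simp_set n" using ts by (auto simp: T_def)
    have tS: "t \<in> simp_set n" by (rule simp_closed[OF tsS tc c])
    define K where "K = {x\<in>A. F x (Lp j) \<le> a}"
    have xsK: "\<And>k. m (ts k) \<in> K" using ts m tsS by (auto simp: K_def T_def)
    obtain z where z: "z \<in> K" "\<forall>U. open U \<longrightarrow> z \<in> U \<longrightarrow> (\<forall>N. \<exists>k\<ge>N. m (ts k) \<in> U)"
      using cluster_pt[of "{x\<in>A. F x (Lp j) \<le> a}" "\<lambda>k. m (ts k)"] cpt[OF jn] xsK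
      unfolding K_def by blast
    have zA: "z \<in> A" using z by (auto simp: K_def)
    have zmin: "\<forall>y\<in>A. F z (bet n Lp t) \<le> F y (bet n Lp t)"
    proof (rule ccontr)
      assume "\<not> ?thesis"
      then obtain y where y: "y \<in> A" "F y (bet n Lp t) < F z (bet n Lp t)" by force
      define Fs where "Fs = F z (bet n Lp t)"
      define eta where "eta = (Fs - F y (bet n Lp t)) / 4"
      have eta: "0 < eta" using y by (simp add: eta_def Fs_def)
      define X where "X = Fs - eta + Bm"
      define e where "e = eta / (2 * (\<bar>X\<bar> + eta))"
      have e0: "0 < e" using eta by (simp add: e_def)
      have e1: "e \<le> 1" using eta by (simp add: e_def pos_divide_le_eq)
      have Xe: "0 < \<bar>X\<bar> + eta" using eta by linarith
      have eX: "e * (\<bar>X\<bar> + eta) = eta / 2" using Xe unfolding e_def by (simp add: field_simps)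
      have eX2: "e * X \<le> eta / 2"
      proof -
        have "e * X \<le> e * (\<bar>X\<bar> + eta)" using e0 eta by (intro mult_left_mono) auto
        then show ?thesis using eX by simp
      qed
      have E0: "\<forall>j'\<in>{..n}. eventually (\<lambda>k. (1 - e) * Wt n t j' \<le> Wt n (ts k) j') sequentially"
      proof
        fix j' assume "j' \<in> {..n}"
        then have j': "j' \<le> n" by simp
        show "eventually (\<lambda>k. (1 - e) * Wt n t j' \<le> Wt n (ts k) j') sequentially"
        proof (cases "Wt n t j' = 0")
          case True
          then show ?thesis using Wt_nonneg[OF tsS j'] by simp
        next
          case False
          then have "0 < Wt n t j'" using Wt_nonneg[OF tS j'] by simp
          then have "(1 - e) * Wt n t j' < Wt n t j'" using e0 by simp
          from order_tendstoD(1)[OF Wt_tendsto[OF c j'] this]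
          show ?thesis by (rule eventually_mono) simp
        qed
      qed
      have E1: "eventually (\<lambda>k. \<forall>j'\<in>{..n}. (1 - e) * Wt n t j' \<le> Wt n (ts k) j') sequentially"
        using eventually_ball_finite[OF finite_atMost E0] .
      have E2: "eventually (\<lambda>k. F y (bet n Lp (ts k)) < F y (bet n Lp t) + eta) sequentially"
      proof -
        have "eventually (\<lambda>k. bet n Lp (ts k) \<in> {l. F y l < F y (bet n Lp t) + eta}) sequentially"
          by (rule topological_tendstoD[OF bet_tendsto[OF tvs_add tvs_scale c] usc[OF y(1)]]) (use eta in simp)
        then show ?thesis by simp
      qed
      obtain N where N: "\<And>k. k \<ge> N \<Longrightarrow> (\<forall>j'\<in>{..n}. (1 - e) * Wt n t j' \<le> Wt n (ts k) j') \<and>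
          F y (bet n Lp (ts k)) < F y (bet n Lp t) + eta"
        using eventually_conj[OF E1 E2] unfolding eventually_sequentially by blast
      have "openin (top_of_set A) {x\<in>A. Fs - eta < F x (bet n Lp t)}"
        using lsc[OF bet_in_hull[OF tS]] unfolding lsc_on_def by blast
      then obtain U where U: "open U" "{x\<in>A. Fs - eta < F x (bet n Lp t)} = A \<inter> U"
        by (auto simp: openin_open)
      have "z \<in> {x\<in>A. Fs - eta < F x (bet n Lp t)}" using zA eta by (simp add: Fs_def)
      then have zU: "z \<in> U" using U(2) by blast
      have "\<exists>k\<ge>N. m (ts k) \<in> U" using z(2) U(1) zU by simp
      then obtain k where k: "k \<ge> N" "m (ts k) \<in> U" by blast
      define xk where "xk = m (ts k)"
      have xkA: "xk \<in> A" using m[OF tsS] by (simp add: xk_def)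
      have "xk \<in> A \<inter> U" using xkA k(2) by (simp add: xk_def)
      then have "xk \<in> {x\<in>A. Fs - eta < F x (bet n Lp t)}" using U(2) by simp
      then have F1: "Fs - eta < F xk (bet n Lp t)" by simp
      have dec: "- F xk (bet n Lp (ts k)) \<le> (1 - e) * (- F xk (bet n Lp t)) + e * Bm"
        by (rule decomp_bet[OF conc[OF xkA] tS tsS e0 e1]) (use N[OF k(1)] lowB xkA in auto)
      have mn: "F xk (bet n Lp (ts k)) \<le> F y (bet n Lp (ts k))" using m[OF tsS] y(1) by (simp add: xk_def)
      have h1: "(1 - e) * (Fs - eta) \<le> (1 - e) * F xk (bet n Lp t)"
        using F1 e1 by (intro mult_left_mono) auto
      have h2: "(1 - e) * (Fs - eta) = Fs - eta - e * Fs + e * eta" by (simp add: algebra_simps)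
      have h3: "e * X = e * Fs - e * eta + e * Bm" by (simp add: X_def algebra_simps)
      have h4: "(1 - e) * (- F xk (bet n Lp t)) = - ((1 - e) * F xk (bet n Lp t))" by simp
      have "F y (bet n Lp t) = Fs - 4 * eta" by (simp add: eta_def field_simps)
      then show False using dec mn h1 h2 h3 h4 eX2 N[OF k(1)] eta by linarith
    qed
    have "z = m t" by (rule uniq[OF bet_in_hull[OF tS] zA]) (use m[OF tS] zmin in auto)
    then show "t \<in> T j" using z tS by (auto simp: T_def K_def)
  qed
  have Tne: "\<exists>j\<le>n. t \<notin> T j" if tS0: "t \<in> simp_set n" for t
  proof -
    obtain j where "j \<le> n" "a < F (m t) (Lp j)" using cover m[OF tS0] by blast
    then show ?thesis by (auto simp: T_def)
  qed
  have simp_cube: "simp_set n \<subseteq> cube n" by (auto simp: simp_set_def)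
  define S where "S t = (\<Sum>j\<le>n. DD n (T j) t)" for t
  have Spos: "0 < S t" if tS1: "t \<in> simp_set n" for t
  proof -
    obtain j where j: "j \<le> n" "t \<notin> T j" using Tne[OF tS1] by blast
    have "0 < DD n (T j) t" by (rule DD_pos[OF Tcl[OF j(1)]]) (use tS1 simp_cube j in auto)
    then show ?thesis unfolding S_def by (intro sum_pos2[of _ j]) (auto simp: DD_nonneg j)
  qed
  have Ssplit: "S t = (\<Sum>j<n. DD n (T j) t) + DD n (T n) t" for t
    unfolding S_def by (rule sum_atMost_split)
  define G where "G t = (\<lambda>i. if i < n then DD n (T i) t / S t else 0)" for t
  define r where "r x = (\<lambda>i. if i < n then x i / max 1 (\<Sum>i<n. x i) else 0)" for x :: "nat \<Rightarrow> real"
  have rsum: "(\<Sum>i<n. r x i) = (\<Sum>i<n. x i) / max 1 (\<Sum>i<n. x i)" for x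
    by (simp add: r_def sum_divide_distrib)
  have r_simp: "r x \<in> simp_set n" if x: "x \<in> cube n" for x
  proof -
    have xs0: "0 \<le> (\<Sum>i<n. x i)" using x by (auto simp: cube_def intro: sum_nonneg)
    have xi: "x i \<le> (\<Sum>i<n. x i)" if "i < n" for i
      using x that by (intro member_le_sum) (auto simp: cube_def)
    have "(\<Sum>i<n. r x i) \<le> 1" unfolding rsum by (simp add: pos_divide_le_eq)
    moreover have "r x \<in> cube n"
      unfolding cube_def r_def using x xi
      by (auto simp: cube_def pos_divide_le_eq intro: order_trans[OF _ max.cobounded2])
    ultimately show ?thesis by (simp add: simp_set_def)
  qed
  have r_id: "r x = x" if x: "x \<in> simp_set n" for x
  proof -
    have "max 1 (\<Sum>i<n. x i) = 1" using x by (simp add: simp_set_def)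
    then show ?thesis using x by (auto simp: r_def simp_set_def cube_def)
  qed
  have G_simp: "G t \<in> simp_set n" if t: "t \<in> simp_set n" for t
  proof -
    have Sp: "0 < S t" by (rule Spos[OF t])
    have sumG: "(\<Sum>i<n. G t i) = (\<Sum>i<n. DD n (T i) t) / S t"
      by (simp add: G_def sum_divide_distrib)
    have "(\<Sum>i<n. DD n (T i) t) \<le> S t" using Ssplit[of t] DD_nonneg[of n "T n" t] by simp
    then have sG: "(\<Sum>i<n. G t i) \<le> 1" using Sp unfolding sumG by (simp add: pos_divide_le_eq)
    have G0: "0 \<le> G t i" for i using Sp by (simp add: G_def DD_nonneg)
    have G1: "G t i \<le> 1" if "i < n" for i
    proof -
      have "G t i \<le> (\<Sum>i<n. G t i)" using that G0 by (intro member_le_sum) auto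
      then show ?thesis using sG by simp
    qed
    have G2: "G t i = 0" if "n \<le> i" for i using that by (simp add: G_def)
    show ?thesis unfolding simp_set_def cube_def using sG G0 G1 G2 by blast
  qed
  have r_cont: "seqconv n (\<lambda>k. r (xs k)) (r x)" if "seqconv n xs x" for xs x
    unfolding seqconv_def r_def
  proof (intro allI impI)
    fix i assume i: "i < n"
    have "(\<lambda>k. xs k i / max 1 (\<Sum>i<n. xs k i)) \<longlonglongrightarrow> x i / max 1 (\<Sum>i<n. x i)"
      by (intro tendsto_divide tendsto_max tendsto_const tendsto_sum) (use that i in \<open>auto simp: seqconv_def\<close>)
    then show "(\<lambda>k. if i < n then xs k i / max 1 (\<Sum>i<n. xs k i) else 0) \<longlonglongrightarrow>
        (if i < n then x i / max 1 (\<Sum>i<n. x i) else 0)" using i by simp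
  qed
  have G_cont: "seqconv n (\<lambda>k. G (ts k)) (G t)" if t: "t \<in> simp_set n" and c: "seqconv n ts t" for ts t
    unfolding seqconv_def G_def
  proof (intro allI impI)
    fix i assume i: "i < n"
    have "(\<lambda>k. DD n (T i) (ts k) / S (ts k)) \<longlonglongrightarrow> DD n (T i) t / S t"
      unfolding S_def
      by (intro tendsto_divide tendsto_sum DD_tendsto[OF c]) (use Spos[OF t] in \<open>auto simp: S_def\<close>)
    then show "(\<lambda>k. if i < n then DD n (T i) (ts k) / S (ts k) else 0) \<longlonglongrightarrow>
        (if i < n then DD n (T i) t / S t else 0)" using i by simp
  qed
  have "\<exists>x\<in>cube n. G (r x) = x"
  proof (rule brouwer_seq)
    fix x assume "x \<in> cube n"
    then show "G (r x) \<in> cube n" using G_simp r_simp simp_cube by blast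
  next
    fix xs x assume xs: "\<And>k. xs k \<in> cube n" and x: "x \<in> cube n" and c: "seqconv n xs x"
    show "seqconv n (\<lambda>k. G (r (xs k))) (G (r x))"
      by (rule G_cont[OF r_simp[OF x] r_cont[OF c]])
  qed
  then obtain x where x: "x \<in> cube n" "G (r x) = x" by blast
  have xS: "x \<in> simp_set n" using G_simp[OF r_simp[OF x(1)]] x(2) by simp
  have Gx: "G x = x" using x(2) r_id[OF xS] by simp
  have Sp: "0 < S x" by (rule Spos[OF xS])
  have Wx: "Wt n x j = DD n (T j) x / S x" if j: "j \<le> n" for j
  proof (cases "j < n")
    case True
    then show ?thesis using fun_cong[OF Gx, of j] by (simp add: Wt_def G_def)
  next
    case False
    then have jn: "j = n" using j by simp
    have "(\<Sum>i<n. x i) = (\<Sum>i<n. DD n (T i) x) / S x"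
    proof -
      have "(\<Sum>i<n. x i) = (\<Sum>i<n. DD n (T i) x / S x)"
      proof (rule sum.cong)
        fix i assume i: "i \<in> {..<n}"
        have "G x i = x i" using Gx by simp
        then show "x i = DD n (T i) x / S x" using i by (simp add: G_def)
      qed simp
      then show ?thesis by (simp add: sum_divide_distrib)
    qed
    then have "Wt n x n = (S x - (\<Sum>i<n. DD n (T i) x)) / S x"
      using Sp by (simp add: Wt_def diff_divide_distrib)
    then show ?thesis using jn Ssplit[of x] by simp
  qed
  define z where "z = m x"
  have zA: "z \<in> A" and zmin: "\<forall>y\<in>A. F z (bet n Lp x) \<le> F y (bet n Lp x)" using m[OF xS] by (auto simp: z_def)
  have za: "F z (bet n Lp x) \<le> a"
  proof -
    obtain w where "w \<in> A" "F w (bet n Lp x) \<le> a" using bound[OF bet_in_hull[OF xS]] by blast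
    then show ?thesis using zmin by force
  qed
  have J: "- F z (bet n Lp x) \<le> (\<Sum>j\<le>n. Wt n x j * - F z (Lp j))"
    by (rule jensen_bet[OF conc[OF zA] xS])
  have Jsum: "(\<Sum>j\<le>n. Wt n x j * F z (Lp j)) \<le> a"
  proof -
    have "(\<Sum>j\<le>n. Wt n x j * - F z (Lp j)) = - (\<Sum>j\<le>n. Wt n x j * F z (Lp j))"
      by (simp add: sum_negf[symmetric])
    then show ?thesis using J za by linarith
  qed
  have "\<exists>j\<le>n. 0 < Wt n x j \<and> F z (Lp j) \<le> a"
  proof (rule ccontr)
    assume H: "\<not> ?thesis"
    have "(\<Sum>j\<le>n. Wt n x j * a) < (\<Sum>j\<le>n. Wt n x j * F z (Lp j))"
    proof (rule sum_strict_mono_ex1)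
      show "\<forall>j\<in>{..n}. Wt n x j * a \<le> Wt n x j * F z (Lp j)"
      proof
        fix j assume j: "j \<in> {..n}"
        show "Wt n x j * a \<le> Wt n x j * F z (Lp j)"
        proof (cases "Wt n x j = 0")
          case False
          then have "0 < Wt n x j" using Wt_nonneg[OF xS, of j] j by simp
          then show ?thesis using H j by (intro mult_left_mono) (auto simp: not_le less_imp_le)
        qed simp
      qed
      have "\<exists>j\<in>{..n}. 0 < Wt n x j"
      proof (rule ccontr)
        assume "\<not> ?thesis"
        then have "\<forall>j\<in>{..n}. Wt n x j = 0" using Wt_nonneg[OF xS] by force
        then show False using Wt_sum[of n x] by simp
      qed
      then obtain j where j: "j \<in> {..n}" "0 < Wt n x j" by blast
      then have "a < F z (Lp j)" using H by auto
      then show "\<exists>j\<in>{..n}. Wt n x j * a < Wt n x j * F z (Lp j)" using j by (intro bexI[OF _ j(1)]) simp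
    qed simp
    moreover have "(\<Sum>j\<le>n. Wt n x j * a) = a" by (simp add: sum_distrib_right[symmetric] Wt_sum)
    ultimately show False using Jsum by simp
  qed
  then obtain j where j: "j \<le> n" "0 < Wt n x j" "F z (Lp j) \<le> a" by blast
  have "x \<in> T j" using xS j by (simp add: T_def z_def)
  then have "DD n (T j) x = 0" by (rule DD_zero)
  then show False using Wx[OF j(1)] j(2) by simp
qed



lemma lsc_min:
  fixes f :: "'a::topological_space \<Rightarrow> real"
  assumes lsc: "lsc_on A f" and ic: "inf_compact_on A f" and x0: "x0 \<in> A"
  shows "\<exists>x. x \<in> A \<and> (\<forall>y\<in>A. f x \<le> f y)"
proof (rule ccontr)
  assume no: "\<not> ?thesis"
  define K where "K = {x\<in>A. f x \<le> f x0}"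
  have K: "compact K" using ic by (simp add: inf_compact_on_def K_def)
  have "\<forall>y\<in>K. \<exists>W. open W \<and> {x\<in>A. f y < f x} = A \<inter> W"
    using lsc unfolding lsc_on_def openin_open by blast
  then obtain Of where Of: "\<And>y. y \<in> K \<Longrightarrow> open (Of y) \<and> {x\<in>A. f y < f x} = A \<inter> Of y"
    by metis
  have cov: "K \<subseteq> (\<Union>y\<in>K. Of y)"
  proof
    fix x assume xK: "x \<in> K"
    then have xA: "x \<in> A" by (simp add: K_def)
    then obtain y where y: "y \<in> A" "f y < f x" using no by (auto simp: not_le)
    then have yK: "y \<in> K" using xK by (auto simp: K_def)
    then have "x \<in> Of y" using Of[OF yK] xA y by blast
    then show "x \<in> (\<Union>y\<in>K. Of y)" using yK by blast
  qed
  obtain K' where K': "K' \<subseteq> K" "finite K'" "K \<subseteq> (\<Union>y\<in>K'. Of y)"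
    using compactE_image[OF K, of K Of] Of cov by blast
  have "x0 \<in> K" using x0 by (simp add: K_def)
  then have "K' \<noteq> {}" using K' by blast
  then have "Min (f ` K') \<in> f ` K'" using K'(2) by (intro Min_in) auto
  then obtain ys where ys: "ys \<in> K'" "f ys = Min (f ` K')" by (metis imageE)
  have ysK: "ys \<in> K" using ys K' by blast
  then obtain y where y: "y \<in> K'" "ys \<in> Of y" using K' by blast
  have "ys \<in> A" using ysK by (simp add: K_def)
  then have "f y < f ys" using Of[of y] y K' by blast
  moreover have "f ys \<le> f y" using ys y K'(2) by simp
  ultimately show False by simp
qed

theorem theorem3p3:
  fixes y0 :: "'y::topological_space"
    and \<phi> :: "'y \<Rightarrow> real"
    and \<Psi> :: "'x::topological_space \<Rightarrow> 'l::{real_vector, t2_space} \<Rightarrow> 'y"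
    and J :: "'x \<Rightarrow> real"
    and \<mu> :: real
    and N :: "'x set set"
  assumes tvs_add: "continuous_on UNIV (\<lambda>p::'l \<times> 'l. fst p + snd p)"
    and tvs_scale: "continuous_on UNIV (\<lambda>p::real \<times> 'l. fst p *\<^sub>R snd p)"
    and G: "\<phi> \<in> class_G y0"
    and H: "\<Psi> \<in> class_H y0"
    and M: "J \<in> class_M"
    and conv: "\<And>x. convex_on UNIV (\<lambda>l. \<phi> (\<Psi> x l))"
    and mu: "\<mu> > theta y0 \<phi> \<Psi> J"
    and N: "filtering_cover N"
    and reg: "\<And>A l. A \<in> N \<Longrightarrow> l \<in> convex hull (range (lam y0 \<Psi>)) \<Longrightarrow>
              lsc_on A (\<lambda>x. J x - \<mu> * \<phi> (\<Psi> x l)) \<and>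
              inf_compact_on A (\<lambda>x. J x - \<mu> * \<phi> (\<Psi> x l))"
  shows "\<exists>A\<in>N. \<exists>l\<in>convex hull (lam y0 \<Psi> ` A). \<exists>x1\<in>A. \<exists>x2\<in>A. x1 \<noteq> x2 \<and>
           (\<forall>x\<in>A. J x1 - \<mu> * \<phi> (\<Psi> x1 l) \<le> J x - \<mu> * \<phi> (\<Psi> x l)) \<and>
           (\<forall>x\<in>A. J x2 - \<mu> * \<phi> (\<Psi> x2 l) \<le> J x - \<mu> * \<phi> (\<Psi> x l))"
proof (rule ccontr)
  assume neg: "\<not> ?thesis"
  define lm where "lm = lam y0 \<Psi>"
  have HH: "\<And>x. continuous_on UNIV (\<Psi> x)" "\<And>x. inj (\<Psi> x)" "\<And>x U. open U \<Longrightarrow> open (\<Psi> x ` U)"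
      "\<And>x. y0 \<in> range (\<Psi> x)"
    using H by (auto simp: class_H_def)
  obtain x1 x2 where x12: "(THE l. \<Psi> x1 l = y0) \<noteq> (THE l. \<Psi> x2 l = y0)"
    using H by (auto simp: class_H_def)
  have lamP: "\<Psi> x (lm x) = y0" for x
  proof -
    obtain l where l: "\<Psi> x l = y0" using HH(4)[of x] by auto
    have "\<exists>!l. \<Psi> x l = y0" using l HH(2)[of x] by (auto dest: injD)
    then show ?thesis unfolding lm_def lam_def by (rule theI')
  qed
  have lamU: "l = lm x" if "\<Psi> x l = y0" for x l
    using lamP[of x] that HH(2)[of x] by (metis injD)
  have x12': "lm x1 \<noteq> lm x2" using x12 by (simp add: lm_def lam_def)
  have GG: "\<And>y. 0 \<le> \<phi> y" "lsc_on UNIV \<phi>" "\<phi> -` {0} = {y0}"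
    "\<And>V. (\<exists>U. open U \<and> y0 \<in> U \<and> U \<subseteq> V) \<Longrightarrow> (\<exists>c>0. \<forall>y\<in>-V. c \<le> \<phi> y)"
    using G by (auto simp: class_G_def)
  have phi0: "\<phi> y = 0 \<longleftrightarrow> y = y0" for y using GG(3) by blast
  have phipos: "0 < \<phi> y" if "y \<noteq> y0" for y using GG(1)[of y] phi0[of y] that by linarith
  obtain u0 where u0: "u0 \<in> minima J" using M by (auto simp: class_M_def)
  obtain xw where xw: "lm xw \<noteq> lm u0" using x12' by metis
  define Qs where "Qs = {(J x - J u) / \<phi> (\<Psi> x (lam y0 \<Psi> u)) | u x.
       u \<in> minima J \<and> lam y0 \<Psi> x \<noteq> lam y0 \<Psi> u}"
  have Qne: "Qs \<noteq> {}" using u0 xw by (auto simp: Qs_def lm_def)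
  have Qnn: "0 \<le> q" if "q \<in> Qs" for q
    using that GG(1) by (auto simp: Qs_def minima_def intro!: divide_nonneg_nonneg)
  have Qbdd: "bdd_below Qs" using Qnn by (intro bdd_belowI[of _ 0]) auto
  have th: "theta y0 \<phi> \<Psi> J = Inf Qs" by (simp add: theta_def Qs_def)
  have th0: "0 \<le> theta y0 \<phi> \<Psi> J" unfolding th using Qne Qnn by (intro cInf_greatest) auto
  have mu0: "0 < \<mu>" using mu th0 by linarith
  have "\<exists>q\<in>Qs. q < \<mu>" using mu Qne Qbdd unfolding th by (simp add: cInf_less_iff)
  then obtain u x0 where ux0: "u \<in> minima J" "lm x0 \<noteq> lm u"
      "(J x0 - J u) / \<phi> (\<Psi> x0 (lm u)) < \<mu>"
    by (auto simp: Qs_def lm_def)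
  have umin: "J u \<le> J x" for x using ux0(1) by (simp add: minima_def)
  have "\<Psi> x0 (lm u) \<noteq> y0" using lamU[of x0 "lm u"] ux0(2) by auto
  then have php: "0 < \<phi> (\<Psi> x0 (lm u))" by (rule phipos)
  have key: "J x0 - J u < \<mu> * \<phi> (\<Psi> x0 (lm u))"
    using ux0(3) php by (simp add: pos_divide_less_eq mult.commute)
  have NN: "\<Union>N = UNIV" "\<forall>A1\<in>N. \<forall>A2\<in>N. \<exists>A3\<in>N. A1 \<union> A2 \<subseteq> A3"
    using N by (simp_all add: filtering_cover_def)
  have "u \<in> \<Union>N" "x0 \<in> \<Union>N" using NN(1) by simp_all
  then obtain A1 A2 where A12: "A1 \<in> N" "A2 \<in> N" "u \<in> A1" "x0 \<in> A2" by blast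
  obtain A where A0: "A \<in> N" "A1 \<union> A2 \<subseteq> A" using NN(2) A12(1,2) by blast
  have A: "A \<in> N" "u \<in> A" "x0 \<in> A" using A0 A12 by auto
  define F where "F x l = J x - \<mu> * \<phi> (\<Psi> x l)" for x l
  have Flam: "F x (lm x) = J x" for x by (simp add: F_def lamP phi0)
  have uniq0: "x1 = x2" if "l \<in> convex hull (lm ` A)" "x1 \<in> A" "x2 \<in> A"
      "\<forall>y\<in>A. F x1 l \<le> F y l" "\<forall>y\<in>A. F x2 l \<le> F y l" for l x1 x2
  proof (rule ccontr)
    assume "x1 \<noteq> x2"
    then have "\<exists>A\<in>N. \<exists>l\<in>convex hull (lam y0 \<Psi> ` A). \<exists>x1\<in>A. \<exists>x2\<in>A. x1 \<noteq> x2 \<and>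
           (\<forall>x\<in>A. J x1 - \<mu> * \<phi> (\<Psi> x1 l) \<le> J x - \<mu> * \<phi> (\<Psi> x l)) \<and>
           (\<forall>x\<in>A. J x2 - \<mu> * \<phi> (\<Psi> x2 l) \<le> J x - \<mu> * \<phi> (\<Psi> x l))"
      using A(1) that unfolding F_def lm_def by blast
    then show False using neg by blast
  qed
  have usc: "open {l. F x l < r}" for x r
  proof -
    have o1: "open {y. (J x - r) / \<mu> < \<phi> y}"
      using GG(2) unfolding lsc_on_def by simp
    have "open (\<Psi> x -` {y. (J x - r) / \<mu> < \<phi> y} \<inter> UNIV)"
      using HH(1)[of x] o1 continuous_on_open_vimage[of UNIV "\<Psi> x"] by blast
    moreover have "\<Psi> x -` {y. (J x - r) / \<mu> < \<phi> y} \<inter> UNIV = {l. F x l < r}"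
      using mu0 by (auto simp: F_def pos_divide_less_eq mult.commute)
    ultimately show ?thesis by simp
  qed
  have conc: "convex_on UNIV (\<lambda>l. - F x l)" for x
  proof -
    have "convex_on UNIV (\<lambda>l. \<mu> * \<phi> (\<Psi> x l) + (- J x))"
      using mu0 conv[of x] by (intro convex_on_add convex_on_cmul) (auto simp: convex_on_const)
    then show ?thesis by (simp add: F_def)
  qed
  have hullR: "convex hull (lm ` A) \<subseteq> convex hull (range lm)" by (rule hull_mono) auto
  have regF: "lsc_on A (\<lambda>x. F x l) \<and> inf_compact_on A (\<lambda>x. F x l)" if "l \<in> convex hull (range lm)" for l
    using reg[OF A(1)] that by (simp add: F_def lm_def)
  have exminR: "\<exists>x. x \<in> A \<and> (\<forall>y\<in>A. F x l \<le> F y l)" if "l \<in> convex hull (range lm)" for l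
    using lsc_min[of A "\<lambda>x. F x l" u] regF[OF that] A(2) by blast
  define c where "c = J u"
  define del where "del = c - F x0 (lm u)"
  have del: "0 < del" using key by (simp add: del_def c_def F_def)
  define W where "W = {l. F x0 l < c - del / 2}"
  have Wo: "open W" unfolding W_def by (rule usc)
  have luW: "lm u \<in> W" using del unfolding W_def del_def by simp argo
  have Vo: "open (\<Psi> u ` W)" by (rule HH(3)[OF Wo])
  have y0V: "y0 \<in> \<Psi> u ` W" using luW lamP[of u] by force
  obtain eps where eps: "0 < eps" "\<And>y. y \<in> - (\<Psi> u ` W) \<Longrightarrow> eps \<le> \<phi> y"
    using GG(4)[of "\<Psi> u ` W"] Vo y0V by blast
  define a where "a = max (c - del / 2) (c - \<mu> * eps)"
  have ac: "a < c" using del eps mu0 by (simp add: a_def)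
  have bound_all: "\<exists>x\<in>A. F x l \<le> a" for l
  proof (cases "l \<in> W")
    case True
    then show ?thesis using A(3) by (intro bexI[of _ x0]) (auto simp: W_def a_def)
  next
    case False
    have "\<Psi> u l \<notin> \<Psi> u ` W"
    proof
      assume "\<Psi> u l \<in> \<Psi> u ` W"
      then obtain w where "w \<in> W" "\<Psi> u l = \<Psi> u w" by auto
      then have "l = w" using HH(2)[of u] by (simp add: inj_eq)
      then show False using False \<open>w \<in> W\<close> by simp
    qed
    then have "eps \<le> \<phi> (\<Psi> u l)" using eps(2) by blast
    then have "\<mu> * eps \<le> \<mu> * \<phi> (\<Psi> u l)" using mu0 by simp
    then show ?thesis using A(2) by (intro bexI[of _ u]) (auto simp: F_def a_def c_def)
  qed
  have aJ: "a < F x (lm x)" for x using ac umin[of x] by (simp add: Flam c_def)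
  define K where "K = {x\<in>A. F x (lm u) \<le> a}"
  have lmR: "lm y \<in> convex hull (range lm)" for y by (rule hull_inc) simp
  have Kc: "compact K" using regF[OF lmR[of u]] by (simp add: inf_compact_on_def K_def)
  have "\<forall>y\<in>K. \<exists>W. open W \<and> {x\<in>A. a < F x (lm y)} = A \<inter> W"
    using regF[OF lmR] unfolding lsc_on_def openin_open by blast
  then obtain Of where Of: "\<And>y. y \<in> K \<Longrightarrow> open (Of y) \<and> {x\<in>A. a < F x (lm y)} = A \<inter> Of y"
    by metis
  have cov: "K \<subseteq> (\<Union>y\<in>K. Of y)"
  proof
    fix y assume yK: "y \<in> K"
    then have "y \<in> {x\<in>A. a < F x (lm y)}" using aJ[of y] by (simp add: K_def)
    then show "y \<in> (\<Union>y\<in>K. Of y)" using Of[OF yK] yK by blast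
  qed
  obtain K' where K': "K' \<subseteq> K" "finite K'" "K \<subseteq> (\<Union>y\<in>K'. Of y)"
    using compactE_image[OF Kc, of K Of] Of cov by blast
  define n where "n = card K'"
  obtain g where g: "bij_betw g {0..<n} K'" using ex_bij_betw_nat_finite[OF K'(2)] by (auto simp: n_def)
  define Lp where "Lp j = (if j < n then lm (g j) else lm u)" for j
  have gK: "g j \<in> K'" if "j < n" for j using g that by (auto simp: bij_betw_def)
  have LpA: "Lp j \<in> lm ` A" for j
    using gK K'(1) A(2) by (auto simp: Lp_def K_def)
  have CsubA: "convex hull (Lp ` {..n}) \<subseteq> convex hull (lm ` A)"
    by (rule hull_mono) (use LpA in auto)
  have CsubR: "convex hull (Lp ` {..n}) \<subseteq> convex hull (range lm)" using CsubA hullR by blast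
  have cover: "\<exists>j\<le>n. a < F x (Lp j)" if xA: "x \<in> A" for x
  proof (cases "a < F x (lm u)")
    case True
    then show ?thesis by (intro exI[of _ n]) (simp add: Lp_def)
  next
    case False
    then have "x \<in> K" using xA by (simp add: K_def)
    then obtain y where y: "y \<in> K'" "x \<in> Of y" using K'(3) by blast
    then obtain j where j: "j < n" "g j = y" using g by (auto simp: bij_betw_def)
    have "x \<in> A \<inter> Of y" using xA y by blast
    then have "a < F x (lm y)" using Of[of y] y K'(1) by blast
    then show ?thesis using j by (intro exI[of _ j]) (simp add: Lp_def)
  qed
  have cpt: "compact {x\<in>A. F x (Lp j) \<le> a}" for j
    using regF[of "Lp j"] LpA[of j] hullR hull_inc[of "Lp j" "lm ` A" convex]
    by (auto simp: inf_compact_on_def)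
  have "\<forall>j. \<exists>b. \<forall>x\<in>A. - F x (Lp j) \<le> b"
  proof
    fix j
    have "Lp j \<in> convex hull (range lm)" using LpA[of j] lmR by auto
    then obtain z where "z \<in> A" "\<forall>y\<in>A. F z (Lp j) \<le> F y (Lp j)" using exminR by blast
    then show "\<exists>b. \<forall>x\<in>A. - F x (Lp j) \<le> b" by (intro exI[of _ "- F z (Lp j)"]) auto
  qed
  then obtain bf where bf: "\<And>j x. x \<in> A \<Longrightarrow> - F x (Lp j) \<le> bf j" by metis
  define Bm where "Bm = Max (bf ` {..n})"
  have lowB: "- F x (Lp j) \<le> Bm" if "j \<le> n" "x \<in> A" for j x
  proof -
    have "bf j \<le> Bm" unfolding Bm_def using that by (intro Max_ge) auto
    then show ?thesis using bf[OF that(2), of j] by linarith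
  qed
  have f_lsc: "\<And>l. l \<in> convex hull (Lp ` {..n}) \<Longrightarrow> lsc_on A (\<lambda>x. F x l)"
  proof -
    fix l assume "l \<in> convex hull (Lp ` {..n})"
    then have "l \<in> convex hull (range lm)" using CsubR by blast
    then show "lsc_on A (\<lambda>x. F x l)" using regF by blast
  qed
  have f_ex: "\<And>l. l \<in> convex hull (Lp ` {..n}) \<Longrightarrow> \<exists>x. x \<in> A \<and> (\<forall>y\<in>A. F x l \<le> F y l)"
  proof -
    fix l assume "l \<in> convex hull (Lp ` {..n})"
    then have "l \<in> convex hull (range lm)" using CsubR by blast
    then show "\<exists>x. x \<in> A \<and> (\<forall>y\<in>A. F x l \<le> F y l)" by (rule exminR)
  qed
  have f_uniq: "\<And>l x1 x2. l \<in> convex hull (Lp ` {..n}) \<Longrightarrow> x1 \<in> A \<Longrightarrow> x2 \<in> A \<Longrightarrow>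
        (\<forall>y\<in>A. F x1 l \<le> F y l) \<Longrightarrow> (\<forall>y\<in>A. F x2 l \<le> F y l) \<Longrightarrow> x1 = x2"
  proof -
    fix l x1 x2 assume h: "l \<in> convex hull (Lp ` {..n})" "x1 \<in> A" "x2 \<in> A"
        "\<forall>y\<in>A. F x1 l \<le> F y l" "\<forall>y\<in>A. F x2 l \<le> F y l"
    have "l \<in> convex hull (lm ` A)" using h(1) CsubA by blast
    then show "x1 = x2" by (rule uniq0[OF _ h(2-5)])
  qed
  show False
    by (rule core[where F=F and A=A and Lp=Lp and n=n and a=a and Bm=Bm, OF tvs_add tvs_scale usc conc f_lsc f_ex f_uniq cpt bound_all cover lowB])
qed

end
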